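(* Assume that for every $y\in\mathcal Y$ the map $u\mapsto\ell(y,u)$ is convex and twice continuously differentiable. Then for every $y,z\in\mathcal Y$ and every $\lambda>0$, $$\big\|\hat f_{\lambda;D^y}-\hat f_{\lambda;D^z}\big\|_{\mathcal H}\le\sqrt{K_{n+1,n+1}}\,\frac{\rho^{(1)}_\lambda(y)}{\lambda(n+1)},$$ where $\rho^{(1)}_\lambda(y)=\frac12\big|-\partial_2\ell(z,\hat f_{\lambda;D^z}(X_{n+1}))+\partial_2\ell(y,\hat f_{\lambda;D^z}(X_{n+1}))\big|$.
   Context: Let $\mathcal X\subset\mathbb R^d$, $\mathcal Y\subset\mathbb R$, $D=\{(X_1,Y_1),\dots,(X_n,Y_n)\}$ i.i.d. with distribution $P$ on $\mathcal X\times\mathcal Y$, $(X_{n+1},Y_{n+1})\sim P$ independent. For $y\in\mathcal Y$, $D^y=D\cup\{(X_{n+1},y)\}$. $\mathcal H$ is an RKHS of functions $\mathcal X\to\mathbb R$ with kernel $\kappa_{\mathcal H}$, and $K_{n+1,n+1}=\kappa_{\mathcal H}(X_{n+1},X_{n+1})$. For a loss $\ell:\mathcal Y\times\mathcal Y\to\mathbb R$ and $\lambda>0$, $\hat f_{\lambda;D^y}$ is the minimizer over $f\in\mathcal H$ of $\frac1{n+1}\sum_{(x,y')\in D^y}\ell(y',f(x))+\lambda\|f\|_{\mathcal H}^2$. $\partial_2\ell(y,u)$ denotes the derivative of $u\mapsto\ell(y,u)$. *)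

theory Defs
  imports "HOL-Analysis.Analysis"
begin

text \<open>RKHS model: a real Hilbert space 'h together with the canonical feature map
  (reproducing representers) \<Phi> :: 'x \<Rightarrow> 'h, so that the element f of the space is the
  function x \<mapsto> f \<bullet> \<Phi> x (reproducing property), with kernel
  \<kappa>(x,x') = \<Phi> x \<bullet> \<Phi> x'.\<close>

definition is_rkhs_feature_map :: "('x \<Rightarrow> 'h::{real_inner,complete_space}) \<Rightarrow> bool" where
  "is_rkhs_feature_map \<Phi> \<longleftrightarrow> (\<forall>f g. (\<forall>x. f \<bullet> \<Phi> x = g \<bullet> \<Phi> x) \<longrightarrow> f = g)"

definition rkhs_eval :: "('x \<Rightarrow> 'h::real_inner) \<Rightarrow> 'h \<Rightarrow> 'x \<Rightarrow> real" where
  "rkhs_eval \<Phi> f x = f \<bullet> \<Phi> x"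

definition rkhs_kernel :: "('x \<Rightarrow> 'h::real_inner) \<Rightarrow> 'x \<Rightarrow> 'x \<Rightarrow> real" where
  "rkhs_kernel \<Phi> x x' = \<Phi> x \<bullet> \<Phi> x'"

text \<open>Regularized empirical risk on the augmented data set
  D^y = {(X_0,Y_0),...,(X_{n-1},Y_{n-1})} \<union> {(Xnew, y)} (a multiset of n+1 points).\<close>
definition reg_risk ::
  "(real \<Rightarrow> real \<Rightarrow> real) \<Rightarrow> ('x \<Rightarrow> 'h::real_inner) \<Rightarrow> real \<Rightarrow> nat \<Rightarrow>
   (nat \<Rightarrow> 'x) \<Rightarrow> (nat \<Rightarrow> real) \<Rightarrow> 'x \<Rightarrow> real \<Rightarrow> 'h \<Rightarrow> real" where
  "reg_risk loss \<Phi> lam n X Y Xnew y f =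
     (1 / real (n + 1)) * ((\<Sum>i<n. loss (Y i) (rkhs_eval \<Phi> f (X i))) + loss y (rkhs_eval \<Phi> f Xnew))
     + lam * (norm f)\<^sup>2"

definition is_reg_minimizer ::
  "(real \<Rightarrow> real \<Rightarrow> real) \<Rightarrow> ('x \<Rightarrow> 'h::real_inner) \<Rightarrow> real \<Rightarrow> nat \<Rightarrow>
   (nat \<Rightarrow> 'x) \<Rightarrow> (nat \<Rightarrow> real) \<Rightarrow> 'x \<Rightarrow> real \<Rightarrow> 'h \<Rightarrow> bool" where
  "is_reg_minimizer loss \<Phi> lam n X Y Xnew y f \<longleftrightarrow>
     (\<forall>g. reg_risk loss \<Phi> lam n X Y Xnew y f \<le> reg_risk loss \<Phi> lam n X Y Xnew y g)"

definition C2_real :: "(real \<Rightarrow> real) \<Rightarrow> bool" where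
  "C2_real L \<longleftrightarrow> (\<forall>u. L differentiable (at u)) \<and> (\<forall>u. deriv L differentiable (at u))
                 \<and> continuous_on UNIV (deriv (deriv L))"

end

theory Submission
  imports Defs
begin

lemma mono_deriv:
  fixes L :: "real \<Rightarrow> real"
  assumes cv: "convex_on UNIV L" and d: "\<forall>u. L differentiable (at u)"
  shows "(deriv L a - deriv L b) * (a - b) \<ge> 0"
proof -
  have D: "\<And>u. (L has_field_derivative deriv L u) (at u within UNIV)"
    using d DERIV_deriv_iff_real_differentiable by auto
  have 1: "L a - L b \<ge> deriv L b * (a - b)"
    by (rule convex_on_imp_above_tangent[OF cv]) (auto intro: D)
  have 2: "L b - L a \<ge> deriv L a * (b - a)"
    by (rule convex_on_imp_above_tangent[OF cv]) (auto intro: D)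
  from 1 2 show ?thesis by (simp add: algebra_simps)
qed

lemma foc:
  fixes loss :: "real \<Rightarrow> real \<Rightarrow> real" and \<Phi> :: "'x \<Rightarrow> 'h::real_inner"
  assumes di: "\<forall>i<n. \<forall>u. loss (Y i) differentiable (at u)"
    and dy: "\<forall>u. loss y differentiable (at u)"
    and mn: "is_reg_minimizer loss \<Phi> lam n X Y x y f"
  shows "(1 / real (n + 1)) * ((\<Sum>i<n. deriv (loss (Y i)) (f \<bullet> \<Phi> (X i)) * (h \<bullet> \<Phi> (X i)))
           + deriv (loss y) (f \<bullet> \<Phi> x) * (h \<bullet> \<Phi> x)) + lam * (2 * (f \<bullet> h)) = 0"
proof -
  define \<psi> where "\<psi> t = (1 / real (n + 1)) * ((\<Sum>i<n. loss (Y i) (f \<bullet> \<Phi> (X i) + t * (h \<bullet> \<Phi> (X i))))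
        + loss y (f \<bullet> \<Phi> x + t * (h \<bullet> \<Phi> x))) + lam * (f \<bullet> f + 2 * t * (f \<bullet> h) + t * t * (h \<bullet> h))" for t
  have eq: "\<psi> t = reg_risk loss \<Phi> lam n X Y x y (f + t *\<^sub>R h)" for t
  proof -
    have "(norm (f + t *\<^sub>R h))\<^sup>2 = f \<bullet> f + 2 * t * (f \<bullet> h) + t * t * (h \<bullet> h)"
      by (simp add: power2_norm_eq_inner inner_add_left inner_add_right inner_commute algebra_simps)
    then show ?thesis unfolding \<psi>_def reg_risk_def rkhs_eval_def
      by (simp add: inner_add_left)
  qed
  have Di: "\<And>i u. i < n \<Longrightarrow> (loss (Y i) has_real_derivative deriv (loss (Y i)) u) (at u)"
    using di DERIV_deriv_iff_real_differentiable by blast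
  have Dy: "\<And>u. (loss y has_real_derivative deriv (loss y) u) (at u)"
    using dy DERIV_deriv_iff_real_differentiable by blast
  have lin: "\<And>a b. ((\<lambda>t::real. a + t * b) has_real_derivative b) (at 0)"
    by (auto intro!: derivative_eq_intros)
  have ch: "\<And>L a b. (L has_real_derivative deriv L a) (at a) \<Longrightarrow>
      ((\<lambda>t. L (a + t * b)) has_real_derivative deriv L a * b) (at 0)"
  proof -
    fix L a b assume "(L has_real_derivative deriv L a) (at a)"
    then have "(L has_real_derivative deriv L a) (at (a + 0 * b))" by simp
    from DERIV_chain2[OF this lin] show "((\<lambda>t. L (a + t * b)) has_real_derivative deriv L a * b) (at 0)" .
  qed
  have "(\<psi> has_real_derivative
     (1 / real (n + 1)) * ((\<Sum>i<n. deriv (loss (Y i)) (f \<bullet> \<Phi> (X i)) * (h \<bullet> \<Phi> (X i)))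
           + deriv (loss y) (f \<bullet> \<Phi> x) * (h \<bullet> \<Phi> x)) + lam * (0 + 2 * (f \<bullet> h) + 0)) (at 0)"
    unfolding \<psi>_def
    apply (intro DERIV_add DERIV_cmult DERIV_sum ch Di Dy)
       apply simp
      apply (rule DERIV_const)
    subgoal by (auto intro!: derivative_eq_intros)
    subgoal by (auto intro!: derivative_eq_intros)
    done
  moreover have "\<forall>t. \<bar>0 - t\<bar> < 1 \<longrightarrow> \<psi> 0 \<le> \<psi> t"
    using mn unfolding is_reg_minimizer_def eq by simp
  ultimately have "(1 / real (n + 1)) * ((\<Sum>i<n. deriv (loss (Y i)) (f \<bullet> \<Phi> (X i)) * (h \<bullet> \<Phi> (X i)))
           + deriv (loss y) (f \<bullet> \<Phi> x) * (h \<bullet> \<Phi> x)) + lam * (0 + 2 * (f \<bullet> h) + 0) = 0"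
    by (intro DERIV_local_min[where d=1]) auto
  then show ?thesis by simp
qed

theorem proposition12:
  fixes loss :: "real \<Rightarrow> real \<Rightarrow> real"
    and \<Phi> :: "real ^ 'd \<Rightarrow> 'h::{real_inner,complete_space}"
    and \<X> :: "(real ^ 'd) set" and \<Y> :: "real set"
    and n :: nat and X :: "nat \<Rightarrow> real ^ 'd" and Y :: "nat \<Rightarrow> real" and Xnew :: "real ^ 'd"
    and y z lam :: real and fy fz :: 'h
  assumes rkhs: "is_rkhs_feature_map \<Phi>"
    and data: "\<forall>i<n. X i \<in> \<X> \<and> Y i \<in> \<Y>" and Xnew: "Xnew \<in> \<X>"
    and convex: "\<forall>v\<in>\<Y>. convex_on UNIV (loss v)"
    and smooth: "\<forall>v\<in>\<Y>. C2_real (loss v)"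
    and y: "y \<in> \<Y>" and z: "z \<in> \<Y>" and lam_pos: "lam > 0"
    and fy: "is_reg_minimizer loss \<Phi> lam n X Y Xnew y fy"
    and fz: "is_reg_minimizer loss \<Phi> lam n X Y Xnew z fz"
  shows "norm (fy - fz) \<le> sqrt (rkhs_kernel \<Phi> Xnew Xnew) *
           ((1/2) * \<bar>- deriv (loss z) (rkhs_eval \<Phi> fz Xnew) + deriv (loss y) (rkhs_eval \<Phi> fz Xnew)\<bar>)
           / (lam * real (n + 1))"
proof -
  define h where "h = fy - fz"
  define N where "N = real (n + 1)"
  have Npos: "N > 0" unfolding N_def by simp
  have dv: "\<And>v. v \<in> \<Y> \<Longrightarrow> \<forall>u. loss v differentiable (at u)"
    using smooth unfolding C2_real_def by blast
  have di: "\<forall>i<n. \<forall>u. loss (Y i) differentiable (at u)" using data dv by blast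
  note Fy = foc[OF di dv[OF y] fy, of h]
  note Fz = foc[OF di dv[OF z] fz, of h]
  define d where "d = deriv (loss y) (fz \<bullet> \<Phi> Xnew) - deriv (loss z) (fz \<bullet> \<Phi> Xnew)"
  define Mi where "Mi i = (deriv (loss (Y i)) (fy \<bullet> \<Phi> (X i)) - deriv (loss (Y i)) (fz \<bullet> \<Phi> (X i))) * (h \<bullet> \<Phi> (X i))" for i
  define My where "My = (deriv (loss y) (fy \<bullet> \<Phi> Xnew) - deriv (loss y) (fz \<bullet> \<Phi> Xnew)) * (h \<bullet> \<Phi> Xnew)"
  have hi: "h \<bullet> \<Phi> u = fy \<bullet> \<Phi> u - fz \<bullet> \<Phi> u" for u unfolding h_def by (simp add: inner_diff_left)
  have Mi0: "(\<Sum>i<n. Mi i) \<ge> 0"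
    unfolding Mi_def hi using data convex dv by (intro sum_nonneg mono_deriv) auto
  have My0: "My \<ge> 0" unfolding My_def hi using y convex dv by (intro mono_deriv) auto
  have hh: "h \<bullet> h = fy \<bullet> h - fz \<bullet> h" unfolding h_def by (simp add: inner_diff_left)
  have key: "(1 / N) * ((\<Sum>i<n. Mi i) + My + d * (h \<bullet> \<Phi> Xnew)) + lam * (2 * (h \<bullet> h)) = 0"
  proof -
    define A where "A = (\<Sum>i<n. deriv (loss (Y i)) (fy \<bullet> \<Phi> (X i)) * (h \<bullet> \<Phi> (X i)))"
    define B where "B = (\<Sum>i<n. deriv (loss (Y i)) (fz \<bullet> \<Phi> (X i)) * (h \<bullet> \<Phi> (X i)))"
    have S: "(\<Sum>i<n. Mi i) = A - B"
      unfolding Mi_def A_def B_def by (simp add: sum_subtractf left_diff_distrib)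
    have Fy': "(1 / N) * (A + deriv (loss y) (fy \<bullet> \<Phi> Xnew) * (h \<bullet> \<Phi> Xnew)) + lam * (2 * (fy \<bullet> h)) = 0"
      using Fy unfolding A_def N_def .
    have Fz': "(1 / N) * (B + deriv (loss z) (fz \<bullet> \<Phi> Xnew) * (h \<bullet> \<Phi> Xnew)) + lam * (2 * (fz \<bullet> h)) = 0"
      using Fz unfolding B_def N_def .
    have "(1 / N) * ((\<Sum>i<n. Mi i) + My + d * (h \<bullet> \<Phi> Xnew)) + lam * (2 * (h \<bullet> h))
      = ((1 / N) * (A + deriv (loss y) (fy \<bullet> \<Phi> Xnew) * (h \<bullet> \<Phi> Xnew)) + lam * (2 * (fy \<bullet> h)))
      - ((1 / N) * (B + deriv (loss z) (fz \<bullet> \<Phi> Xnew) * (h \<bullet> \<Phi> Xnew)) + lam * (2 * (fz \<bullet> h)))"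
      unfolding S My_def d_def hh by (simp add: algebra_simps)
    then show ?thesis using Fy' Fz' by simp
  qed
  have "2 * lam * (h \<bullet> h) \<le> - d * (h \<bullet> \<Phi> Xnew) / N"
  proof -
    have "(1 / N) * ((\<Sum>i<n. Mi i) + My) \<ge> 0" using Mi0 My0 Npos by simp
    with key show ?thesis by (simp add: algebra_simps add_divide_distrib)
  qed
  also have "\<dots> \<le> \<bar>d\<bar> * (norm h * norm (\<Phi> Xnew)) / N"
  proof -
    have "- d * (h \<bullet> \<Phi> Xnew) \<le> \<bar>d\<bar> * \<bar>h \<bullet> \<Phi> Xnew\<bar>"
      by (metis abs_ge_minus_self abs_minus abs_mult mult_minus_left)
    also have "\<dots> \<le> \<bar>d\<bar> * (norm h * norm (\<Phi> Xnew))"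
      by (intro mult_left_mono Cauchy_Schwarz_ineq2) auto
    finally show ?thesis using Npos by (metis divide_right_mono less_imp_le minus_divide_left)
  qed
  finally have ineq: "2 * lam * (norm h)\<^sup>2 \<le> \<bar>d\<bar> * (norm h * norm (\<Phi> Xnew)) / N"
    by (simp add: power2_norm_eq_inner)
  have K: "sqrt (rkhs_kernel \<Phi> Xnew Xnew) = norm (\<Phi> Xnew)"
    unfolding rkhs_kernel_def by (simp add: norm_eq_sqrt_inner)
  have goal: "norm h \<le> norm (\<Phi> Xnew) * ((1/2) * \<bar>d\<bar>) / (lam * N)"
  proof (cases "norm h = 0")
    case True then show ?thesis using lam_pos Npos by simp
  next
    case False
    then have hp: "norm h > 0" by simp
    from ineq have "norm h * (2 * lam * norm h) \<le> norm h * (\<bar>d\<bar> * norm (\<Phi> Xnew) / N)"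
      by (simp add: power2_eq_square algebra_simps)
    then have "2 * lam * norm h \<le> \<bar>d\<bar> * norm (\<Phi> Xnew) / N"
      by (rule mult_left_le_imp_le[OF _ hp])
    then show ?thesis using lam_pos Npos by (simp add: field_simps)
  qed
  show ?thesis using goal unfolding K h_def N_def d_def rkhs_eval_def
    by (simp add: algebra_simps)
qed

end
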